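(* Define the relation $\sim$ on $\mathcal{T}$ by $x \sim y \iff \delta(x,y) = 0$ (warping identification). Then $\sim$ is an equivalence relation on $\mathcal{T}$.
   Context: A time series of length $n\ge 1$ is a finite sequence $x=(x_1,\dots,x_n)$ of reals; $\mathcal{T}$ denotes the set of all time series of finite length. For $m,n\in\mathbb{N}$, a warping path of order $m\times n$ and length $\ell$ is a sequence $p=(p_1,\dots,p_\ell)$ of points $p_l=(i_l,j_l)\in[m]\times[n]$ (where $[n]=\{1,\dots,n\}$) with $p_1=(1,1)$, $p_\ell=(m,n)$, and $p_{l+1}-p_l\in\{(1,0),(0,1),(1,1)\}$ for all $l\in[\ell-1]$; $\mathcal{P}_{m,n}$ is the set of such paths. For $x$ of length $m$ and $y$ of length $n$, the cost along $p$ is $C_p(x,y)=\sum_{(i,j)\in p}(x_i-y_j)^2$, and the dtw-distance is $\delta(x,y)=\min\{\sqrt{C_p(x,y)} : p\in\mathcal{P}_{m,n}\}$. *)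

theory Defs
  imports "HOL-Analysis.Analysis"
begin

text \<open>Time series are finite nonempty lists of reals; component i (1-based) of x is x ! (i - 1).\<close>

definition time_series :: "real list set" where
  "time_series = {x. x \<noteq> []}"

definition warping_path :: "nat \<Rightarrow> nat \<Rightarrow> (nat \<times> nat) list \<Rightarrow> bool" where
  "warping_path m n p \<longleftrightarrow>
     p \<noteq> [] \<and>
     (\<forall>l < length p. fst (p ! l) \<in> {1..m} \<and> snd (p ! l) \<in> {1..n}) \<and>
     hd p = (1, 1) \<and> last p = (m, n) \<and>
     (\<forall>l. Suc l < length p \<longrightarrow>
        (fst (p ! Suc l), snd (p ! Suc l)) \<in>
          {(fst (p ! l) + 1, snd (p ! l)), (fst (p ! l), snd (p ! l) + 1),
           (fst (p ! l) + 1, snd (p ! l) + 1)})"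

definition warping_paths :: "nat \<Rightarrow> nat \<Rightarrow> (nat \<times> nat) list set" where
  "warping_paths m n = {p. warping_path m n p}"

definition path_cost :: "(nat \<times> nat) list \<Rightarrow> real list \<Rightarrow> real list \<Rightarrow> real" where
  "path_cost p x y = (\<Sum>(i, j) \<leftarrow> p. (x ! (i - 1) - y ! (j - 1))\<^sup>2)"

definition dtw :: "real list \<Rightarrow> real list \<Rightarrow> real" where
  "dtw x y = Min ((\<lambda>p. sqrt (path_cost p x y)) ` warping_paths (length x) (length y))"

definition warp_equiv :: "(real list \<times> real list) set" where
  "warp_equiv = {(x, y). x \<in> time_series \<and> y \<in> time_series \<and> dtw x y = 0}"

end

theory Submission
  imports Defs
begin

fun steps :: "(nat \<times> nat) list \<Rightarrow> bool" where
  "steps [] = True"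
| "steps [_] = True"
| "steps (a # b # r) = (b \<in> {(fst a + 1, snd a), (fst a, snd a + 1), (fst a + 1, snd a + 1)} \<and> steps (b # r))"

definition spath :: "(nat \<times> nat) list \<Rightarrow> nat \<times> nat \<Rightarrow> nat \<times> nat \<Rightarrow> bool" where
  "spath p a b \<longleftrightarrow> p \<noteq> [] \<and> hd p = a \<and> last p = b \<and> steps p"

lemma all_nat_split': "(\<forall>l::nat. Q l) = (Q 0 \<and> (\<forall>l. Q (Suc l)))"
  by (metis not0_implies_Suc)

lemma steps_nth:
  "steps p \<longleftrightarrow> (\<forall>l. Suc l < length p \<longrightarrow>
        (fst (p ! Suc l), snd (p ! Suc l)) \<in>
          {(fst (p ! l) + 1, snd (p ! l)), (fst (p ! l), snd (p ! l) + 1),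
           (fst (p ! l) + 1, snd (p ! l) + 1)})"
proof (induction p rule: steps.induct)
  case (3 a b r)
  show ?case
    apply (subst all_nat_split')
    using 3 by simp
qed auto

lemma steps_mono:
  "steps p \<Longrightarrow> q \<in> set p \<Longrightarrow> fst (hd p) \<le> fst q \<and> snd (hd p) \<le> snd q \<and> fst q \<le> fst (last p) \<and> snd q \<le> snd (last p)"
proof (induction p arbitrary: q rule: steps.induct)
  case (3 a b r)
  have ib: "fst b \<le> fst (last (b # r)) \<and> snd b \<le> snd (last (b # r))"
    using 3(1)[of b] 3(2) by simp
  have ab: "fst a \<le> fst b \<and> snd a \<le> snd b" using 3(2) by auto
  show ?case
  proof (cases "q = a")
    case True
    then show ?thesis using ib ab by simp
  next
    case False
    then have qi: "q \<in> set (b # r)" using 3 by simp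
    have st: "steps (b # r)" using 3(2) by simp
    have "fst b \<le> fst q \<and> snd b \<le> snd q \<and> fst q \<le> fst (last (b#r)) \<and> snd q \<le> snd (last (b#r))"
      using 3(1)[OF st qi] by simp
    with ab show ?thesis by simp
  qed
qed auto

lemma steps_len:
  "steps p \<Longrightarrow> p \<noteq> [] \<Longrightarrow> length p + fst (hd p) + snd (hd p) \<le> fst (last p) + snd (last p) + 1"
proof (induction p rule: steps.induct)
  case (3 a b r)
  have "steps (b # r)" using 3(2) by simp
  then have "length (b # r) + fst b + snd b \<le> fst (last (b # r)) + snd (last (b # r)) + 1"
    using 3(1) by simp
  moreover have "fst b + snd b = fst a + snd a + 1 \<or> fst b + snd b = fst a + snd a + 2"
    using 3(2) by auto
  ultimately show ?case by auto
qed auto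

lemma spath_single: "spath [a] a a"
  by (simp add: spath_def)

lemma spath_cons:
  "spath p b c \<Longrightarrow> b \<in> {(fst a + 1, snd a), (fst a, snd a + 1), (fst a + 1, snd a + 1)} \<Longrightarrow> spath (a # p) a c"
  unfolding spath_def by (cases p) auto

lemma wp_iff: "warping_path m n p \<longleftrightarrow> spath p (1,1) (m,n)"
proof
  assume "warping_path m n p"
  then show "spath p (1,1) (m,n)" unfolding warping_path_def spath_def steps_nth by blast
next
  assume s: "spath p (1,1) (m,n)"
  have "\<forall>l<length p. fst (p ! l) \<in> {1..m} \<and> snd (p ! l) \<in> {1..n}"
  proof (intro allI impI)
    fix l assume "l < length p"
    then have "p ! l \<in> set p" by simp
    from steps_mono[OF _ this] s show "fst (p ! l) \<in> {1..m} \<and> snd (p ! l) \<in> {1..n}"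
      unfolding spath_def by auto
  qed
  with s show "warping_path m n p" unfolding warping_path_def spath_def steps_nth by blast
qed

lemma path_exists:
  "i \<le> m \<Longrightarrow> j \<le> n \<Longrightarrow> \<exists>p. spath p (i,j) (m,n)"
proof (induction "m - i + (n - j)" arbitrary: i j rule: less_induct)
  case less
  show ?case
  proof (cases "i < m")
    case True
    have lt: "m - Suc i + (n - j) < m - i + (n - j)" using True by simp
    have "\<exists>p. spath p (Suc i, j) (m,n)" using less(1)[OF lt] True less(3) by simp
    then obtain p where "spath p (Suc i, j) (m,n)" by blast
    then show ?thesis by (intro exI[of _ "(i,j) # p"]) (rule spath_cons, auto)
  next
    case False
    show ?thesis
    proof (cases "j < n")
      case True
      have lt: "m - i + (n - Suc j) < m - i + (n - j)" using True by simp
      have "\<exists>p. spath p (i, Suc j) (m,n)" using less(1)[OF lt] True less(2) by simp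
      then obtain p where "spath p (i, Suc j) (m,n)" by blast
      then show ?thesis by (intro exI[of _ "(i,j) # p"]) (rule spath_cons, auto)
    next
      case False
      with \<open>\<not> i < m\<close> less have "i = m" "j = n" by auto
      then show ?thesis using spath_single by blast
    qed
  qed
qed

lemma cost_nonneg: "0 \<le> path_cost p x y"
  unfolding path_cost_def by (induction p) auto

lemma cost_zero: "path_cost p x y = 0 \<longleftrightarrow> (\<forall>(a,b)\<in>set p. x ! (a - 1) = y ! (b - 1))"
proof (induction p)
  case Nil
  then show ?case by (simp add: path_cost_def)
next
  case (Cons q p)
  obtain a b where q: "q = (a,b)" by force
  have c: "path_cost (q # p) x y = (x ! (a - 1) - y ! (b - 1))\<^sup>2 + path_cost p x y"
    unfolding path_cost_def q by simp
  have "0 \<le> path_cost p x y" by (rule cost_nonneg)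
  moreover have "0 \<le> (x ! (a - 1) - y ! (b - 1))\<^sup>2" by simp
  ultimately have "path_cost (q # p) x y = 0 \<longleftrightarrow> (x ! (a - 1) - y ! (b - 1))\<^sup>2 = 0 \<and> path_cost p x y = 0"
    unfolding c by linarith
  then show ?case using Cons q by auto
qed

lemma drop_cons: "i < length x \<Longrightarrow> drop i x = x ! i # drop (Suc i) x"
  by (simp add: Cons_nth_drop_Suc)

lemma path_to_rd:
  "spath p (Suc i, Suc j) (length x, length y) \<Longrightarrow> \<forall>(a,b)\<in>set p. x ! (a - 1) = y ! (b - 1)
   \<Longrightarrow> remdups_adj (drop i x) = remdups_adj (drop j y)"
proof (induction p arbitrary: i j)
  case Nil
  then show ?case by (simp add: spath_def)
next
  case (Cons q p)
  have hq: "q = (Suc i, Suc j)" using Cons.prems by (simp add: spath_def)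
  have st: "steps (q # p)" and lst: "last (q # p) = (length x, length y)"
    using Cons.prems by (auto simp: spath_def)
  have bd: "Suc i \<le> length x" "Suc j \<le> length y"
    using steps_mono[OF st, of q] lst hq by auto
  have e0: "x ! i = y ! j" using Cons.prems(2) hq by auto
  show ?case
  proof (cases p)
    case Nil
    then have "Suc i = length x" "Suc j = length y" using lst hq by auto
    then have "drop i x = [x ! i]" "drop j y = [y ! j]"
      by (metis Cons_nth_drop_Suc drop_all lessI order_refl)+
    then show ?thesis using e0 by simp
  next
    case (Cons q' r)
    obtain i' j' where q': "q' = (i', j')" by force
    have st': "steps p" using st \<open>p = q' # r\<close> by simp
    have sp: "spath p q' (length x, length y)"
      using st' lst \<open>p = q' # r\<close> by (simp add: spath_def)
    have stp: "q' \<in> {(Suc (Suc i), Suc j), (Suc i, Suc (Suc j)), (Suc (Suc i), Suc (Suc j))}"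
      using st \<open>p = q' # r\<close> hq by simp
    have bd': "i' \<le> length x" "j' \<le> length y"
      using steps_mono[OF st', of q'] lst \<open>p = q' # r\<close> q' by auto
    have allp: "\<forall>(a,b)\<in>set p. x ! (a - 1) = y ! (b - 1)" using Cons.prems(2) by auto
    have eq': "x ! (i' - 1) = y ! (j' - 1)" using allp \<open>p = q' # r\<close> q' by auto
    have dxi: "drop i x = x ! i # drop (Suc i) x" "drop j y = y ! j # drop (Suc j) y"
      using bd by (simp_all add: Cons_nth_drop_Suc)
    from stp consider "q' = (Suc (Suc i), Suc j)" | "q' = (Suc i, Suc (Suc j))"
      | "q' = (Suc (Suc i), Suc (Suc j))" by blast
    then show ?thesis
    proof cases
      case 1
      note h = this
      have IH: "remdups_adj (drop (Suc i) x) = remdups_adj (drop j y)"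
        using Cons.IH[of "Suc i" j] sp allp h by simp
      have "Suc i < length x" using h q' bd' by simp
      then have d1: "drop (Suc i) x = x ! Suc i # drop (Suc (Suc i)) x"
        by (simp add: Cons_nth_drop_Suc)
      have "x ! Suc i = x ! i" using eq' h q' e0 by simp
      then have "remdups_adj (drop i x) = remdups_adj (drop (Suc i) x)"
        unfolding dxi(1) d1 by simp
      then show ?thesis using IH by simp
    next
      case 2
      note h = this
      have IH: "remdups_adj (drop i x) = remdups_adj (drop (Suc j) y)"
        using Cons.IH[of i "Suc j"] sp allp h by simp
      have "Suc j < length y" using h q' bd' by simp
      then have d1: "drop (Suc j) y = y ! Suc j # drop (Suc (Suc j)) y"
        by (simp add: Cons_nth_drop_Suc)
      have "y ! Suc j = y ! j" using eq' h q' e0 by simp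
      then have "remdups_adj (drop j y) = remdups_adj (drop (Suc j) y)"
        unfolding dxi(2) d1 by simp
      then show ?thesis using IH by simp
    next
      case 3
      note h = this
      have IH: "remdups_adj (drop (Suc i) x) = remdups_adj (drop (Suc j) y)"
        using Cons.IH[of "Suc i" "Suc j"] sp allp h by simp
      have "Suc i < length x" "Suc j < length y" using h q' bd' by simp_all
      then have dx': "drop (Suc i) x = x ! Suc i # drop (Suc (Suc i)) x"
        and dy': "drop (Suc j) y = y ! Suc j # drop (Suc (Suc j)) y"
        by (simp_all add: Cons_nth_drop_Suc)
      have e1: "x ! Suc i = y ! Suc j" using eq' h q' by simp
      have "remdups_adj (x ! i # drop (Suc i) x) = remdups_adj (y ! j # drop (Suc j) y)"
        using IH e0 e1 unfolding dx' dy' by simp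
      then show ?thesis unfolding dxi .
    qed
  qed
qed

lemma rd_to_path:
  "i < length x \<Longrightarrow> j < length y \<Longrightarrow> remdups_adj (drop i x) = remdups_adj (drop j y)
   \<Longrightarrow> \<exists>p. spath p (Suc i, Suc j) (length x, length y) \<and> (\<forall>(a,b)\<in>set p. x ! (a - 1) = y ! (b - 1))"
proof (induction "length x - i + (length y - j)" arbitrary: i j rule: less_induct)
  case less
  have dxi: "drop i x = x ! i # drop (Suc i) x" and dyj: "drop j y = y ! j # drop (Suc j) y"
    using less(2,3) by (simp_all add: Cons_nth_drop_Suc)
  have e0: "x ! i = y ! j"
    using arg_cong[OF less(4), of hd] unfolding dxi dyj by simp
  have ext: "\<exists>p. spath p (Suc i, Suc j) (length x, length y) \<and> (\<forall>(a,b)\<in>set p. x ! (a - 1) = y ! (b - 1))"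
    if "spath p q (length x, length y)" "\<forall>(a,b)\<in>set p. x ! (a - 1) = y ! (b - 1)"
       "q \<in> {(Suc i + 1, Suc j), (Suc i, Suc j + 1), (Suc i + 1, Suc j + 1)}" for p q
  proof (intro exI[of _ "(Suc i, Suc j) # p"] conjI)
    show "spath ((Suc i, Suc j) # p) (Suc i, Suc j) (length x, length y)"
      using spath_cons[OF that(1)] that(3) by simp
    show "\<forall>(a,b)\<in>set ((Suc i, Suc j) # p). x ! (a - 1) = y ! (b - 1)"
      using that(2) e0 by simp
  qed
  show ?case
  proof (cases "Suc i < length x \<and> x ! Suc i = x ! i")
    case True
    have d1: "drop (Suc i) x = x ! Suc i # drop (Suc (Suc i)) x"
      using conjunct1[OF True] by (simp add: Cons_nth_drop_Suc)
    have "remdups_adj (drop i x) = remdups_adj (drop (Suc i) x)"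
      unfolding dxi d1 using True by simp
    then have r: "remdups_adj (drop (Suc i) x) = remdups_adj (drop j y)" using less(4) by simp
    have lt: "length x - Suc i + (length y - j) < length x - i + (length y - j)"
      using conjunct1[OF True] by linarith
    obtain p where "spath p (Suc (Suc i), Suc j) (length x, length y)"
      "\<forall>(a,b)\<in>set p. x ! (a - 1) = y ! (b - 1)"
      using less(1)[OF lt _ less(3) r] True by blast
    then show ?thesis using ext by simp
  next
    case nA: False
    show ?thesis
    proof (cases "Suc j < length y \<and> y ! Suc j = y ! j")
      case True
      have d1: "drop (Suc j) y = y ! Suc j # drop (Suc (Suc j)) y"
        using conjunct1[OF True] by (simp add: Cons_nth_drop_Suc)
      have "remdups_adj (drop j y) = remdups_adj (drop (Suc j) y)"
        unfolding dyj d1 using True by simp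
      then have r: "remdups_adj (drop i x) = remdups_adj (drop (Suc j) y)" using less(4) by simp
      have lt: "length x - i + (length y - Suc j) < length x - i + (length y - j)"
        using conjunct1[OF True] by linarith
      obtain p where "spath p (Suc i, Suc (Suc j)) (length x, length y)"
        "\<forall>(a,b)\<in>set p. x ! (a - 1) = y ! (b - 1)"
        using less(1)[OF lt less(2) _ r] True by blast
      then show ?thesis using ext by simp
    next
      case nB: False
      show ?thesis
      proof (cases "Suc i < length x")
        case ci: True
        show ?thesis
        proof (cases "Suc j < length y")
          case cj: True
          have d1: "drop (Suc i) x = x ! Suc i # drop (Suc (Suc i)) x"
            using ci by (simp add: Cons_nth_drop_Suc)
          have d2: "drop (Suc j) y = y ! Suc j # drop (Suc (Suc j)) y"
            using cj by (simp add: Cons_nth_drop_Suc)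
          have "x ! i # remdups_adj (drop (Suc i) x) = y ! j # remdups_adj (drop (Suc j) y)"
            using less(4) nA nB ci cj unfolding dxi dyj d1 d2 by simp
          then have r: "remdups_adj (drop (Suc i) x) = remdups_adj (drop (Suc j) y)" by simp
          have lt: "length x - Suc i + (length y - Suc j) < length x - i + (length y - j)" using ci by simp
          obtain p where "spath p (Suc (Suc i), Suc (Suc j)) (length x, length y)"
            "\<forall>(a,b)\<in>set p. x ! (a - 1) = y ! (b - 1)"
            using less(1)[OF lt ci cj r] by blast
          then show ?thesis using ext by simp
        next
          case cj: False
          then have "drop (Suc j) y = []" by simp
          moreover have d1: "drop (Suc i) x = x ! Suc i # drop (Suc (Suc i)) x"
            using ci by (simp add: Cons_nth_drop_Suc)
          ultimately show ?thesis using less(4) nA ci unfolding dxi dyj d1 by simp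
        qed
      next
        case ci: False
        show ?thesis
        proof (cases "Suc j < length y")
          case cj: True
          have "drop (Suc i) x = []" using ci by simp
          moreover have d1: "drop (Suc j) y = y ! Suc j # drop (Suc (Suc j)) y"
            using cj by (simp add: Cons_nth_drop_Suc)
          ultimately show ?thesis using less(4) nB cj unfolding dxi dyj d1
            by (simp add: eq_commute[of "[]"])
        next
          case cj: False
          have li: "length x = Suc i" "length y = Suc j" using ci cj less(2,3) by auto
          show ?thesis unfolding li using spath_single[of "(Suc i, Suc j)"] e0
            by (intro exI[of _ "[(Suc i, Suc j)]"]) simp
        qed
      qed
    qed
  qed
qed

lemma dtw_zero_iff:
  assumes "x \<noteq> []" "y \<noteq> []"
  shows "dtw x y = 0 \<longleftrightarrow> remdups_adj x = remdups_adj y"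
proof -
  define m where "m = length x"
  define n where "n = length y"
  have mn: "1 \<le> m" "1 \<le> n" using assms by (auto simp: m_def n_def Suc_le_eq)
  define S where "S = (\<lambda>p. sqrt (path_cost p x y)) ` warping_paths m n"
  have d: "dtw x y = Min S" unfolding dtw_def S_def m_def n_def ..
  have "warping_paths m n \<subseteq> {p. set p \<subseteq> {1..m} \<times> {1..n} \<and> length p \<le> m + n}"
  proof
    fix p assume "p \<in> warping_paths m n"
    then have w: "warping_path m n p" by (simp add: warping_paths_def)
    then have sp: "spath p (1,1) (m,n)" by (simp add: wp_iff)
    have "set p \<subseteq> {1..m} \<times> {1..n}"
    proof
      fix q assume "q \<in> set p"
      then obtain l where "l < length p" "q = p ! l" by (auto simp: in_set_conv_nth)
      then show "q \<in> {1..m} \<times> {1..n}" using w unfolding warping_path_def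
        by (metis mem_Sigma_iff prod.collapse)
    qed
    moreover have "length p \<le> m + n"
      using steps_len[of p] sp unfolding spath_def by simp
    ultimately show "p \<in> {p. set p \<subseteq> {1..m} \<times> {1..n} \<and> length p \<le> m + n}" by simp
  qed
  moreover have "finite {p. set p \<subseteq> {1..m} \<times> {1..n} \<and> length p \<le> m + n}"
    by (rule finite_lists_length_le) simp
  ultimately have "finite (warping_paths m n)" by (rule finite_subset)
  then have fin: "finite S" unfolding S_def by simp
  obtain p0 where "spath p0 (1,1) (m,n)" using path_exists[of 1 m 1 n] mn by blast
  then have "p0 \<in> warping_paths m n" by (simp add: warping_paths_def wp_iff)
  then have ne: "S \<noteq> {}" unfolding S_def by blast
  have nn: "\<forall>s\<in>S. 0 \<le> s" unfolding S_def using cost_nonneg by simp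
  have "dtw x y = 0 \<longleftrightarrow> 0 \<in> S"
  proof
    assume "dtw x y = 0"
    then show "0 \<in> S" using Min_in[OF fin ne] d by simp
  next
    assume z: "0 \<in> S"
    then have "Min S \<le> 0" using Min_le[OF fin] by blast
    moreover have "0 \<le> Min S" using Min_in[OF fin ne] nn by blast
    ultimately show "dtw x y = 0" using d by simp
  qed
  also have "\<dots> \<longleftrightarrow> (\<exists>p. spath p (1,1) (m,n) \<and> (\<forall>(a,b)\<in>set p. x ! (a - 1) = y ! (b - 1)))"
    unfolding S_def warping_paths_def using cost_zero wp_iff by auto
  also have "\<dots> \<longleftrightarrow> remdups_adj x = remdups_adj y"
  proof
    assume "\<exists>p. spath p (1,1) (m,n) \<and> (\<forall>(a,b)\<in>set p. x ! (a - 1) = y ! (b - 1))"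
    then obtain p where "spath p (Suc 0, Suc 0) (length x, length y)"
      "\<forall>(a,b)\<in>set p. x ! (a - 1) = y ! (b - 1)" by (auto simp: m_def n_def)
    from path_to_rd[OF this] show "remdups_adj x = remdups_adj y" by simp
  next
    assume "remdups_adj x = remdups_adj y"
    then have "remdups_adj (drop 0 x) = remdups_adj (drop 0 y)" by simp
    from rd_to_path[OF _ _ this] assms
    show "\<exists>p. spath p (1,1) (m,n) \<and> (\<forall>(a,b)\<in>set p. x ! (a - 1) = y ! (b - 1))"
      by (simp add: m_def n_def)
  qed
  finally show ?thesis .
qed

theorem proposition1:
  shows "equiv time_series warp_equiv"
proof (rule equivI)
  show "warp_equiv \<subseteq> time_series \<times> time_series" by (auto simp: warp_equiv_def)
  show "refl_on time_series warp_equiv"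
    by (intro refl_onI) (auto simp: warp_equiv_def time_series_def dtw_zero_iff)
  show "sym warp_equiv"
    by (rule symI) (auto simp: warp_equiv_def time_series_def dtw_zero_iff)
  show "trans warp_equiv"
    by (rule transI) (auto simp: warp_equiv_def time_series_def dtw_zero_iff)
qed

end
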